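(* Assume the perfect setting (the pretrained LLM coincides with the conditional distribution $\mathtt{LLM}$ induced by the pretraining distribution $\mathbb{P}_{\mathcal{D}}$ described in the context, and the Reporter's translator coincides with the true emission $\mathbb{O}$). Then for all $(h,t)\in[H]\times[T]$, the LLM's recommended policy $\pi^t_{h,\mathtt{LLM}}(\cdot\mid\tau_h^t,\omega^t):=\mathtt{LLM}(\cdot\mid \mathtt{pt}_h^t)$ satisfies $$\pi^t_{h,\mathtt{LLM}}(\cdot\mid\tau_h^t,\omega^t)=\sum_{z\in\mathcal{Z}}\pi^*_{z,h}(\cdot\mid\tau_h^t,\omega^t)\cdot\mathbb{P}_{\mathcal{D}}(z\mid\mathtt{pt}_h^t),$$ where $\mathtt{pt}_h^t=\mathcal{H}_t\cup\{\omega^t,\tau_h^t\}$ and $\mathbb{P}_{\mathcal{D}}(z\mid \mathtt{pt}_h^t)$ is the posterior of $z$ given the prompt under $\mathbb{P}_{\mathcal{D}}$.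
   Context: High-level model: a finite set $\mathcal{Z}$ of latent variables; state space $\mathcal{S}$, observation space $\mathcal{O}$, subgoal space $\mathcal{G}$, task space $\Omega$, horizon $H\in\mathbb{N}$. For each $z\in\mathcal{Z}$ there are transition kernels $\mathbb{P}_{z,h}(s'\mid s,g)$, $h\in[H]$; a common emission distribution $\mathbb{O}(o\mid s)$; an initial state distribution $\rho$; rewards $r_h(o,\omega)\in[0,1]$. A trajectory up to step $h$ is $\tau_h=(o_1,g_1,\dots,o_{h-1},g_{h-1},o_h)$. A policy is $\pi=\{\pi_h\}_{h\in[H]}$ with $\pi_h:(\mathcal{O}\times\mathcal{G})^{h-1}\times\mathcal{O}\times\Omega\to\Delta(\mathcal{G})$; under $z$ and task $\omega$: $s_1\sim\rho$, $o_h\sim\mathbb{O}(\cdot\mid s_h)$, $g_h\sim\pi_h(\cdot\mid\tau_h,\omega)$, $s_{h+1}\sim\mathbb{P}_{z,h}(\cdot\mid s_h,g_h)$. The value is $\mathcal{J}_z(\pi,\omega)=\mathbb{E}[\sum_{h=1}^H r_h(o_h,\omega)]$ and $\pi^*_z(\omega)\in\arg\max_\pi\mathcal{J}_z(\pi,\omega)$ is an optimal policy with step-$h$ components $\pi^*_{z,h}(\cdot\mid\tau_h,\omega)$. Pretraining distribution: given priors $\mathcal{P}_{\mathcal{Z}}$ on $\mathcal{Z}$, $\mathcal{P}_\Omega$ on $\Omega$, a behavior policy $\pi^b$ and $T_{\rm p}\in\mathbb{N}$, a data point $D=\{z\}\cup\{\omega^t,\tau_H^t,g^{t,*}_{1:H},s^t_{1:H}\}_{t\in[T_{\rm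 p}]}$ has joint law $$\mathbb{P}_{\mathcal{D}}(D)=\mathcal{P}_{\mathcal{Z}}(z)\prod_{t=1}^{T_{\rm p}}\mathcal{P}_\Omega(\omega^t)\prod_{h=1}^{H}\pi^*_{z,h}(g^{t,*}_h\mid\tau_h^t,\omega^t)\,\mathbb{O}(o_h^t\mid s_h^t)\,\pi^b_h(g_h^t\mid\tau_h^t,\omega^t)\,\mathbb{P}_{z,h}(s^t_{h+1}\mid s_h^t,g_h^t)$$ (the expert labels $g^{t,*}_h$ do not influence the trajectory). The LLM is trained on the token sequences $(\omega^t,o_1^t,g_1^t,\dots,o_H^t)_{t}$ where at each subgoal position the target token is the expert label $g_h^{t,*}$; the (perfect) $\mathtt{LLM}(\cdot\mid S)$ is the conditional distribution under $\mathbb{P}_{\mathcal{D}}$ of the next target token given the preceding token sequence $S$ (with $z$ unobserved). In episode $t$ of deployment, $\mathcal{H}_t=\{\omega^i,\tau_H^i\}_{i=1}^{t-1}$ is the history of previous tasks and full trajectories, and the prompt at step $h$ is $\mathtt{pt}_h^t=\mathcal{H}_t\cup\{\omega^t,\tau_h^t\}$. *)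

theory Defs
  imports "HOL-Probability.Probability"
begin

text \<open>A (high-level) policy: step index h, past pairs (o_1,g_1,...,o_{h-1},g_{h-1}),
  current observation o_h, task; returns a distribution over subgoals.\<close>
type_synonym ('o, 'g, 'w) policy = "nat \<Rightarrow> ('o \<times> 'g) list \<Rightarrow> 'o \<Rightarrow> 'w \<Rightarrow> 'g pmf"

fun run_steps ::
  "('z \<Rightarrow> nat \<Rightarrow> 's \<Rightarrow> 'g \<Rightarrow> 's pmf) \<Rightarrow> ('s \<Rightarrow> 'o pmf) \<Rightarrow> ('o, 'g, 'w) policy \<Rightarrow>
   'z \<Rightarrow> 'w \<Rightarrow> nat \<Rightarrow> nat \<Rightarrow> 's \<Rightarrow> ('o \<times> 'g) list \<Rightarrow> 'o list pmf" where
  "run_steps P Ob pol z w 0 h s past = return_pmf []"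
| "run_steps P Ob pol z w (Suc n) h s past =
     bind_pmf (Ob s) (\<lambda>ob. bind_pmf (pol h past ob w) (\<lambda>g. bind_pmf (P z h s g) (\<lambda>s'.
       map_pmf (\<lambda>rest. ob # rest) (run_steps P Ob pol z w n (Suc h) s' (past @ [(ob, g)])))))"

definition value_J ::
  "('z \<Rightarrow> nat \<Rightarrow> 's \<Rightarrow> 'g \<Rightarrow> 's pmf) \<Rightarrow> ('s \<Rightarrow> 'o pmf) \<Rightarrow> 's pmf \<Rightarrow>
   (nat \<Rightarrow> 'o \<Rightarrow> 'w \<Rightarrow> real) \<Rightarrow> nat \<Rightarrow> 'z \<Rightarrow> ('o, 'g, 'w) policy \<Rightarrow> 'w \<Rightarrow> real" where
  "value_J P Ob rho r H z pol w =
     measure_pmf.expectation (bind_pmf rho (\<lambda>s. run_steps P Ob pol z w H 1 s []))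
       (\<lambda>os. \<Sum>h<length os. r (Suc h) (os ! h) w)"

definition optimal_policy ::
  "('z \<Rightarrow> nat \<Rightarrow> 's \<Rightarrow> 'g \<Rightarrow> 's pmf) \<Rightarrow> ('s \<Rightarrow> 'o pmf) \<Rightarrow> 's pmf \<Rightarrow>
   (nat \<Rightarrow> 'o \<Rightarrow> 'w \<Rightarrow> real) \<Rightarrow> nat \<Rightarrow> 'z \<Rightarrow> ('o, 'g, 'w) policy \<Rightarrow> bool" where
  "optimal_policy P Ob rho r H z pol \<longleftrightarrow>
     (\<forall>w pol'. value_J P Ob rho r H z pol' w \<le> value_J P Ob rho r H z pol w)"

text \<open>The expert label does not influence the trajectory.\<close>
fun pre_steps ::
  "('z \<Rightarrow> nat \<Rightarrow> 's \<Rightarrow> 'g \<Rightarrow> 's pmf) \<Rightarrow> ('s \<Rightarrow> 'o pmf) \<Rightarrow> ('z \<Rightarrow> ('o, 'g, 'w) policy) \<Rightarrow>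
   ('o, 'g, 'w) policy \<Rightarrow> 'z \<Rightarrow> 'w \<Rightarrow> nat \<Rightarrow> nat \<Rightarrow> 's \<Rightarrow> ('o \<times> 'g) list \<Rightarrow>
   ('s \<times> 'o \<times> 'g \<times> 'g) list pmf" where
  "pre_steps P Ob pis pib z w 0 h s past = return_pmf []"
| "pre_steps P Ob pis pib z w (Suc n) h s past =
     bind_pmf (Ob s) (\<lambda>ob. bind_pmf (pis z h past ob w) (\<lambda>gs. bind_pmf (pib h past ob w) (\<lambda>g.
       bind_pmf (P z h s g) (\<lambda>s'.
         map_pmf (\<lambda>rest. (s, ob, g, gs) # rest)
           (pre_steps P Ob pis pib z w n (Suc h) s' (past @ [(ob, g)]))))))"

definition pre_episode ::
  "('z \<Rightarrow> nat \<Rightarrow> 's \<Rightarrow> 'g \<Rightarrow> 's pmf) \<Rightarrow> ('s \<Rightarrow> 'o pmf) \<Rightarrow> 's pmf \<Rightarrow> 'w pmf \<Rightarrow>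
   ('z \<Rightarrow> ('o, 'g, 'w) policy) \<Rightarrow> ('o, 'g, 'w) policy \<Rightarrow> nat \<Rightarrow> 'z \<Rightarrow>
   ('w \<times> ('s \<times> 'o \<times> 'g \<times> 'g) list) pmf" where
  "pre_episode P Ob rho PW pis pib H z =
     bind_pmf PW (\<lambda>w. bind_pmf rho (\<lambda>s.
       map_pmf (\<lambda>st. (w, st)) (pre_steps P Ob pis pib z w H 1 s [])))"

fun pre_episodes ::
  "('z \<Rightarrow> nat \<Rightarrow> 's \<Rightarrow> 'g \<Rightarrow> 's pmf) \<Rightarrow> ('s \<Rightarrow> 'o pmf) \<Rightarrow> 's pmf \<Rightarrow> 'w pmf \<Rightarrow>
   ('z \<Rightarrow> ('o, 'g, 'w) policy) \<Rightarrow> ('o, 'g, 'w) policy \<Rightarrow> nat \<Rightarrow> 'z \<Rightarrow> nat \<Rightarrow>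
   ('w \<times> ('s \<times> 'o \<times> 'g \<times> 'g) list) list pmf" where
  "pre_episodes P Ob rho PW pis pib H z 0 = return_pmf []"
| "pre_episodes P Ob rho PW pis pib H z (Suc n) =
     bind_pmf (pre_episode P Ob rho PW pis pib H z) (\<lambda>e.
       map_pmf (\<lambda>es. e # es) (pre_episodes P Ob rho PW pis pib H z n))"

definition pretrain_dist ::
  "'z pmf \<Rightarrow> ('z \<Rightarrow> nat \<Rightarrow> 's \<Rightarrow> 'g \<Rightarrow> 's pmf) \<Rightarrow> ('s \<Rightarrow> 'o pmf) \<Rightarrow> 's pmf \<Rightarrow> 'w pmf \<Rightarrow>
   ('z \<Rightarrow> ('o, 'g, 'w) policy) \<Rightarrow> ('o, 'g, 'w) policy \<Rightarrow> nat \<Rightarrow> nat \<Rightarrow>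
   ('z \<times> ('w \<times> ('s \<times> 'o \<times> 'g \<times> 'g) list) list) pmf" where
  "pretrain_dist PZ P Ob rho PW pis pib H Tp =
     bind_pmf PZ (\<lambda>z. map_pmf (\<lambda>es. (z, es)) (pre_episodes P Ob rho PW pis pib H z Tp))"

text \<open>Partial trajectory tau_h = (o_1,g_1,...,o_{h-1},g_{h-1},o_h) of an episode (h >= 1),
  represented as the list of the first h-1 (o,g) pairs together with o_h.\<close>
definition ep_traj :: "('w \<times> ('s \<times> 'o \<times> 'g \<times> 'g) list) \<Rightarrow> nat \<Rightarrow> ('o \<times> 'g) list \<times> 'o" where
  "ep_traj e h = (take (h - 1) (map (\<lambda>(s, x, g, gs). (x, g)) (snd e)),
                  fst (snd (snd e ! (h - 1))))"

text \<open>The event that a data point matches the prompt pt_h^t = H_t \<union> {w^t, tau_h^t}, where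
  the history hist = [(w^1, tau_H^1), ..., (w^{t-1}, tau_H^{t-1})] (so t = length hist + 1)
  and tau_h^t = (past, o) with h = length past + 1.\<close>
definition prompt_event ::
  "nat \<Rightarrow> ('w \<times> (('o \<times> 'g) list \<times> 'o)) list \<Rightarrow> 'w \<Rightarrow> ('o \<times> 'g) list \<Rightarrow> 'o \<Rightarrow>
   ('z \<times> ('w \<times> ('s \<times> 'o \<times> 'g \<times> 'g) list) list) set" where
  "prompt_event H hist w past ob =
     {D. length hist < length (snd D) \<and>
         (\<forall>i < length hist. fst (snd D ! i) = fst (hist ! i) \<and>
                            ep_traj (snd D ! i) H = snd (hist ! i)) \<and>
         fst (snd D ! length hist) = w \<and>
         ep_traj (snd D ! length hist) (Suc (length past)) = (past, ob)}"

text \<open>Expert label g_h^{t,*} of episode t (given as 0-based index t-1) at step h.\<close>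
definition expert_label :: "('z \<times> ('w \<times> ('s \<times> 'o \<times> 'g \<times> 'g) list) list) \<Rightarrow> nat \<Rightarrow> nat \<Rightarrow> 'g" where
  "expert_label D i h = snd (snd (snd (snd (snd D ! i) ! (h - 1))))"

definition cond_prob :: "'a pmf \<Rightarrow> 'a set \<Rightarrow> 'a set \<Rightarrow> real" where
  "cond_prob p A B = measure_pmf.prob p (A \<inter> B) / measure_pmf.prob p B"

text \<open>The perfect LLM: conditional law under P_D of the next target token (the expert label
  g_h^{t,*}) given the prompt pt_h^t.\<close>
definition LLM ::
  "('z \<times> ('w \<times> ('s \<times> 'o \<times> 'g \<times> 'g) list) list) pmf \<Rightarrow> nat \<Rightarrow>
   ('w \<times> (('o \<times> 'g) list \<times> 'o)) list \<Rightarrow> 'w \<Rightarrow> ('o \<times> 'g) list \<Rightarrow> 'o \<Rightarrow> 'g \<Rightarrow> real" where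
  "LLM PD H hist w past ob g =
     cond_prob PD {D. expert_label D (length hist) (Suc (length past)) = g}
                  (prompt_event H hist w past ob)"

definition posterior ::
  "('z \<times> ('w \<times> ('s \<times> 'o \<times> 'g \<times> 'g) list) list) pmf \<Rightarrow> nat \<Rightarrow>
   ('w \<times> (('o \<times> 'g) list \<times> 'o)) list \<Rightarrow> 'w \<Rightarrow> ('o \<times> 'g) list \<Rightarrow> 'o \<Rightarrow> 'z \<Rightarrow> real" where
  "posterior PD H hist w past ob z =
     cond_prob PD {D. fst D = z} (prompt_event H hist w past ob)"

end

theory Submission
  imports Defs
begin

lemma measure_bind_pmf_real:
  "measure_pmf.prob (bind_pmf M N) X = (\<integral>x. measure_pmf.prob (N x) X \<partial>M)"
proof -
  have int: "integrable (measure_pmf M) (\<lambda>x. measure_pmf.prob (N x) X)"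
    by (rule measure_pmf.integrable_const_bound[where B=1]) auto
  have "ennreal (measure_pmf.prob (bind_pmf M N) X) = (\<integral>\<^sup>+x. ennreal (measure_pmf.prob (N x) X) \<partial>M)"
    by (simp only: measure_pmf.emeasure_eq_measure[symmetric] emeasure_bind_pmf)
  also have "\<dots> = ennreal (\<integral>x. measure_pmf.prob (N x) X \<partial>M)"
    by (rule nn_integral_eq_integral[OF int]) auto
  finally show ?thesis by (simp add: integral_nonneg_AE)
qed

definition Prp :: "'a pmf \<Rightarrow> 'a set \<Rightarrow> 'a set \<Rightarrow> real \<Rightarrow> bool" where
  "Prp p L A c \<longleftrightarrow> measure_pmf.prob p (L \<inter> A) = c * measure_pmf.prob p A"

lemma Prp_bind:
  assumes "\<And>x. x \<in> set_pmf p \<Longrightarrow> Prp (f x) L A c"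
  shows "Prp (bind_pmf p f) L A c"
proof -
  have "(\<integral>x. measure_pmf.prob (f x) (L \<inter> A) \<partial>p) = (\<integral>x. c * measure_pmf.prob (f x) A \<partial>p)"
    using assms by (intro integral_cong_AE) (auto simp: AE_measure_pmf_iff Prp_def)
  then show ?thesis unfolding Prp_def measure_bind_pmf_real by simp
qed

lemma Prp_map:
  assumes "Prp p (g -` L) (g -` A) c"
  shows "Prp (map_pmf g p) L A c"
  using assms by (simp add: Prp_def vimage_Int)

lemma Prp_null:
  assumes "A \<inter> set_pmf p = {}"
  shows "Prp p L A c"
proof -
  have "measure_pmf.prob p A = 0" using assms by (simp add: measure_pmf_zero_iff Int_commute)
  moreover have "measure_pmf.prob p (L \<inter> A) = 0" using assms by (auto simp: measure_pmf_zero_iff)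
  ultimately show ?thesis by (simp add: Prp_def)
qed

lemma Prp_cong:
  assumes "L \<inter> A \<inter> set_pmf p = L' \<inter> A' \<inter> set_pmf p" "A \<inter> set_pmf p = A' \<inter> set_pmf p"
    and "Prp p L' A' c"
  shows "Prp p L A c"
  using assms unfolding Prp_def by (metis measure_Int_set_pmf)

lemma length_pre_steps:
  "l \<in> set_pmf (pre_steps P Ob pis pib z w n h s past) \<Longrightarrow> length l = n"
  by (induction n arbitrary: h s past l) auto

lemma Prp_head:
  assumes "\<And>gs l. l \<in> set_pmf (F gs) \<Longrightarrow> l \<noteq> [] \<and> lab (l!0) = gs \<and> l \<in> A"
  shows "Prp (bind_pmf Q F) {l. lab (l!0) = g} A (pmf Q g)"
proof -
  have e1: "measure_pmf.prob (F gs) ({l. lab (l!0) = g} \<inter> A) = indicator {g} gs" for gs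
  proof -
    have eq: "{l. lab (l!0) = g} \<inter> A \<inter> set_pmf (F gs) = (if gs = g then set_pmf (F gs) else {})"
      using assms by auto
    have "measure_pmf.prob (F gs) ({l. lab (l!0) = g} \<inter> A) =
       measure_pmf.prob (F gs) ({l. lab (l!0) = g} \<inter> A \<inter> set_pmf (F gs))"
      by (rule measure_Int_set_pmf[symmetric])
    also have "\<dots> = measure_pmf.prob (F gs) (if gs = g then set_pmf (F gs) else {})"
      by (simp only: eq)
    also have "\<dots> = indicator {g} gs"
      using measure_Int_set_pmf[of "F gs" UNIV] by (cases "gs = g") simp_all
    finally show ?thesis .
  qed
  have e2: "measure_pmf.prob (F gs) A = 1" for gs
  proof -
    have "A \<inter> set_pmf (F gs) = UNIV \<inter> set_pmf (F gs)" using assms by auto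
    then have "measure_pmf.prob (F gs) A = measure_pmf.prob (F gs) UNIV"
      by (metis (no_types) measure_Int_set_pmf)
    then show ?thesis by simp
  qed
  have "(\<integral>x. indicator {g} x \<partial>Q) = pmf Q g"
    by (simp add: measure_pmf_single)
  then show ?thesis unfolding Prp_def measure_bind_pmf_real e1 e2 by simp
qed

definition trproj :: "('s \<times> 'o \<times> 'g \<times> 'g) \<Rightarrow> ('o \<times> 'g)" where
  "trproj t = (fst (snd t), fst (snd (snd t)))"

lemma trproj_simp[simp]: "trproj (a, b, c, d) = (b, c)"
  by (simp add: trproj_def)

lemma Prp_steps:
  fixes P :: "'z \<Rightarrow> nat \<Rightarrow> 's \<Rightarrow> 'g \<Rightarrow> 's pmf" and Ob :: "'s \<Rightarrow> 'o pmf"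
    and pis :: "'z \<Rightarrow> ('o, 'g, 'w) policy" and pib :: "('o, 'g, 'w) policy" and w :: 'w
  shows "k < n \<Longrightarrow> Prp (pre_steps P Ob pis pib z w n h0 s past0)
     {l. snd (snd (snd (l!k))) = g}
     {l. take k (map trproj l) = pfx \<and> fst (snd (l!k)) = ob}
     (pmf (pis z (h0+k) (past0@pfx) ob w) g)"
proof (induction n arbitrary: k h0 s past0 pfx)
  case 0 then show ?case by simp
next
  case (Suc n)
  show ?case
  proof (cases k)
    case 0
    show ?thesis
    proof (cases "pfx = []")
      case False
      then show ?thesis using 0 by (intro Prp_null) auto
    next
      case True
      show ?thesis unfolding 0 True pre_steps.simps
      proof (rule Prp_bind)
        fix ob' :: 'o assume "ob' \<in> set_pmf (Ob s)"
        show "Prp (pis z h0 past0 ob' w \<bind> (\<lambda>gs. pib h0 past0 ob' w \<bind> (\<lambda>g. P z h0 s g \<bind>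
           (\<lambda>s'. map_pmf ((#) (s, ob', g, gs)) (pre_steps P Ob pis pib z w n (Suc h0) s' (past0 @ [(ob', g)]))))))
           {l. snd (snd (snd (l ! 0))) = g} {l. take 0 (map trproj l) = [] \<and> fst (snd (l ! 0)) = ob}
           (pmf (pis z (h0 + 0) (past0 @ []) ob w) g)"
        proof (cases "ob' = ob")
          case True
          then show ?thesis by simp (rule Prp_head, auto)
        next
          case False
          then show ?thesis by (intro Prp_null) auto
        qed
      qed
    qed
  next
    case (Suc k')
    show ?thesis unfolding Suc pre_steps.simps
    proof (intro Prp_bind Prp_map)
      fix ob' :: 'o and gs g' :: 'g and s' :: 's
      let ?f = "(#) (s, ob', g', gs)"
      show "Prp (pre_steps P Ob pis pib z w n (Suc h0) s' (past0 @ [(ob', g')]))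
          (?f -` {l. snd (snd (snd (l ! Suc k'))) = g})
          (?f -` {l. take (Suc k') (map trproj l) = pfx \<and> fst (snd (l ! Suc k')) = ob})
          (pmf (pis z (h0 + Suc k') (past0 @ pfx) ob w) g)"
      proof (cases "\<exists>pfx'. pfx = (ob', g') # pfx'")
        case True
        then obtain pfx' where pf: "pfx = (ob', g') # pfx'" by blast
        have "k' < n" using Suc.prems Suc by simp
        from Suc.IH[OF this, of "Suc h0" s' "past0 @ [(ob', g')]" pfx']
        show ?thesis using pf by simp
      next
        case False
        then show ?thesis by (intro Prp_null) auto
      qed
    qed
  qed
qed

lemma trproj_eq: "(\<lambda>(s, x, g, gs). (x, g)) = trproj"
  by (auto simp: fun_eq_iff trproj_def)

lemma Prp_episode:
  fixes P :: "'z \<Rightarrow> nat \<Rightarrow> 's \<Rightarrow> 'g \<Rightarrow> 's pmf" and Ob :: "'s \<Rightarrow> 'o pmf"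
    and pis :: "'z \<Rightarrow> ('o, 'g, 'w) policy" and pib :: "('o, 'g, 'w) policy" and w :: 'w
    and past :: "('o \<times> 'g) list"
  assumes "length past < H"
  shows "Prp (pre_episode P Ob rho PW pis pib H z)
     {e. snd (snd (snd (snd e ! length past))) = g}
     {e. fst e = w \<and> ep_traj e (Suc (length past)) = (past, ob)}
     (pmf (pis z (Suc (length past)) past ob w) g)"
  unfolding pre_episode_def
proof (rule Prp_bind)
  fix w' :: 'w
  assume "w' \<in> set_pmf PW"
  show "Prp (rho \<bind> (\<lambda>s. map_pmf (Pair w') (pre_steps P Ob pis pib z w' H 1 s [])))
     {e. snd (snd (snd (snd e ! length past))) = g}
     {e. fst e = w \<and> ep_traj e (Suc (length past)) = (past, ob)}
     (pmf (pis z (Suc (length past)) past ob w) g)"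
  proof (cases "w' = w")
    case False
    then show ?thesis by (intro Prp_null) auto
  next
    case True
    show ?thesis unfolding True
    proof (intro Prp_bind Prp_map)
      fix s
      from Prp_steps[OF assms, of P Ob pis pib z w 1 s "[]" g past ob]
      show "Prp (pre_steps P Ob pis pib z w H 1 s [])
          (Pair w -` {e. snd (snd (snd (snd e ! length past))) = g})
          (Pair w -` {e. fst e = w \<and> ep_traj e (Suc (length past)) = (past, ob)})
          (pmf (pis z (Suc (length past)) past ob w) g)"
        by (simp add: ep_traj_def trproj_eq)
    qed
  qed
qed

lemma prob_hd_bind:
  "measure_pmf.prob (bind_pmf ep (\<lambda>e. map_pmf (Cons e) q)) {es. 0 < length es \<and> es ! 0 \<in> B}
   = measure_pmf.prob ep B"
proof -
  have "(\<integral>e. measure_pmf.prob q ((#) e -` {es. 0 < length es \<and> es ! 0 \<in> B}) \<partial>ep)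
      = (\<integral>e. indicator B e \<partial>ep)"
    by (intro Bochner_Integration.integral_cong) (auto simp: indicator_def)
  then show ?thesis by (simp add: measure_bind_pmf_real)
qed

lemma Prp_episodes:
  assumes "Prp (pre_episode P Ob rho PW pis pib H z) L1 A1 c"
  shows "i < n \<Longrightarrow> Prp (pre_episodes P Ob rho PW pis pib H z n)
     {es. es ! i \<in> L1} {es. i < length es \<and> (\<forall>j<i. es ! j \<in> C j) \<and> es ! i \<in> A1} c"
proof (induction i arbitrary: n C)
  case 0
  then obtain m where n: "n = Suc m" by (cases n) auto
  let ?ep = "pre_episode P Ob rho PW pis pib H z"
  let ?q = "pre_episodes P Ob rho PW pis pib H z m"
  have s1: "{es. es ! 0 \<in> L1} \<inter> {es. 0 < length es \<and> (\<forall>j<0. es ! j \<in> C j) \<and> es ! 0 \<in> A1}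
      = {es. 0 < length es \<and> es ! 0 \<in> L1 \<inter> A1}" by auto
  have s2: "{es. 0 < length es \<and> (\<forall>j<0. es ! j \<in> C j) \<and> es ! 0 \<in> A1}
      = {es. 0 < length es \<and> es ! 0 \<in> A1}" by auto
  show ?case using assms unfolding Prp_def n pre_episodes.simps s1 unfolding s2 prob_hd_bind
    by (simp add: Int_commute)
next
  case (Suc i)
  then obtain m where n: "n = Suc m" and im: "i < m" by (cases n) auto
  show ?case unfolding n pre_episodes.simps
  proof (intro Prp_bind Prp_map)
    fix e
    show "Prp (pre_episodes P Ob rho PW pis pib H z m) ((#) e -` {es. es ! Suc i \<in> L1})
         ((#) e -` {es. Suc i < length es \<and> (\<forall>j<Suc i. es ! j \<in> C j) \<and> es ! Suc i \<in> A1}) c"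
    proof (cases "e \<in> C 0")
      case False
      then show ?thesis by (intro Prp_null) auto
    next
      case True
      have eq: "((#) e -` {es. Suc i < length es \<and> (\<forall>j<Suc i. es ! j \<in> C j) \<and> es ! Suc i \<in> A1})
         = {es. i < length es \<and> (\<forall>j<i. es ! j \<in> C (Suc j)) \<and> es ! i \<in> A1}"
        using True by (auto simp: All_less_Suc2)
      show ?thesis unfolding eq using Suc.IH[OF im, of "\<lambda>j. C (Suc j)"] by simp
    qed
  qed
qed

theorem proposition1:
  fixes PZ :: "'z::finite pmf"
    and P :: "'z \<Rightarrow> nat \<Rightarrow> 's \<Rightarrow> 'g \<Rightarrow> 's pmf"
    and Ob :: "'s \<Rightarrow> 'o pmf"
    and rho :: "'s pmf"
    and PW :: "'w pmf"
    and r :: "nat \<Rightarrow> 'o \<Rightarrow> 'w \<Rightarrow> real"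
    and pis :: "'z \<Rightarrow> ('o, 'g, 'w) policy"
    and pib :: "('o, 'g, 'w) policy"
    and H Tp :: nat
    and hist :: "('w \<times> (('o \<times> 'g) list \<times> 'o)) list"
    and w :: 'w and past :: "('o \<times> 'g) list" and ob :: 'o
  assumes reward_range: "\<forall>h x v. 0 \<le> r h x v \<and> r h x v \<le> 1"
    and pis_optimal: "\<forall>z. optimal_policy P Ob rho r H z (pis z)"
    and t_le: "length hist < Tp"
    and h_le: "length past < H"
    and prompt_pos: "measure_pmf.prob (pretrain_dist PZ P Ob rho PW pis pib H Tp)
                       (prompt_event H hist w past ob) > 0"
  shows "\<forall>g. LLM (pretrain_dist PZ P Ob rho PW pis pib H Tp) H hist w past ob g =
           (\<Sum>z\<in>UNIV. pmf (pis z (Suc (length past)) past ob w) g *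
              posterior (pretrain_dist PZ P Ob rho PW pis pib H Tp) H hist w past ob z)"
proof (intro allI)
  fix g :: 'g
  let ?PD = "pretrain_dist PZ P Ob rho PW pis pib H Tp"
  let ?eps = "\<lambda>z. pre_episodes P Ob rho PW pis pib H z Tp"
  let ?E = "prompt_event H hist w past ob"
  define L1 where "L1 = {e :: 'w \<times> ('s \<times> 'o \<times> 'g \<times> 'g) list. snd (snd (snd (snd e ! length past))) = g}"
  define A1 where "A1 = {e :: 'w \<times> ('s \<times> 'o \<times> 'g \<times> 'g) list. fst e = w \<and> ep_traj e (Suc (length past)) = (past, ob)}"
  define C where "C = (\<lambda>j. {e :: 'w \<times> ('s \<times> 'o \<times> 'g \<times> 'g) list. fst e = fst (hist ! j) \<and> ep_traj e H = snd (hist ! j)})"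
  define Ez where "Ez = {es. length hist < length es \<and> (\<forall>j<length hist. es ! j \<in> C j) \<and> es ! length hist \<in> A1}"
  define Lz where "Lz = {es. es ! length hist \<in> L1}"
  define c where "c = (\<lambda>z. pmf (pis z (Suc (length past)) past ob w) g)"
  have probPD: "measure_pmf.prob ?PD X = (\<Sum>z\<in>UNIV. pmf PZ z * measure_pmf.prob (?eps z) (Pair z -` X))" for X
    unfolding pretrain_dist_def measure_bind_pmf_real measure_map_pmf
    by (subst integral_measure_pmf[of UNIV]) (auto simp: mult.commute)
  have pL: "Pair z -` ({D. expert_label D (length hist) (Suc (length past)) = g} \<inter> ?E) = Lz \<inter> Ez" for z
    by (auto simp: prompt_event_def expert_label_def Lz_def Ez_def L1_def A1_def C_def)
  have pZ: "Pair z -` ({D. fst D = z'} \<inter> ?E) = (if z = z' then Ez else {})" for z z'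
    by (auto simp: prompt_event_def Ez_def A1_def C_def)
  have key: "measure_pmf.prob (?eps z) (Lz \<inter> Ez) = c z * measure_pmf.prob (?eps z) Ez" for z
  proof -
    have "Prp (pre_episode P Ob rho PW pis pib H z) L1 A1 (c z)"
      unfolding L1_def A1_def c_def by (rule Prp_episode[OF h_le])
    from Prp_episodes[OF this t_le, of C]
    show ?thesis unfolding Prp_def Lz_def Ez_def .
  qed
  have post: "posterior ?PD H hist w past ob z' =
      pmf PZ z' * measure_pmf.prob (?eps z') Ez / measure_pmf.prob ?PD ?E" for z'
  proof -
    have "measure_pmf.prob ?PD ({D. fst D = z'} \<inter> ?E) = pmf PZ z' * measure_pmf.prob (?eps z') Ez"
    proof -
      have "(\<Sum>z\<in>UNIV. pmf PZ z * measure_pmf.prob (?eps z) (if z = z' then Ez else {}))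
          = (\<Sum>z\<in>UNIV. if z = z' then pmf PZ z * measure_pmf.prob (?eps z) Ez else 0)"
        by (intro sum.cong) auto
      also have "\<dots> = pmf PZ z' * measure_pmf.prob (?eps z') Ez" by (simp add: sum.delta')
      finally show ?thesis unfolding probPD pZ .
    qed
    then show ?thesis unfolding posterior_def cond_prob_def by simp
  qed
  have "LLM ?PD H hist w past ob g =
      (\<Sum>z\<in>UNIV. pmf PZ z * (c z * measure_pmf.prob (?eps z) Ez)) / measure_pmf.prob ?PD ?E"
    unfolding LLM_def cond_prob_def probPD pL key ..
  also have "\<dots> = (\<Sum>z\<in>UNIV. c z * (pmf PZ z * measure_pmf.prob (?eps z) Ez / measure_pmf.prob ?PD ?E))"
    by (simp add: sum_divide_distrib algebra_simps)
  finally show "LLM ?PD H hist w past ob g =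
      (\<Sum>z\<in>UNIV. pmf (pis z (Suc (length past)) past ob w) g * posterior ?PD H hist w past ob z)"
    unfolding post c_def .
qed

end
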